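(* Consider one time step (from time $t-1$ to time $t$, $t\ge1$) of the multi-class stochastic six-vertex model with classes $\{1,\dots,n\}$ and finitely many particles, and let $p_{t-1}^{(r)}(k)$ and $p_t^{(r)}(k)$ denote the positions before and after the step of the $k$-th particle of class $r$ (class-$r$ particles tagged in increasing order of position). Then for every integer $v\ge0$, every $r\in[1,n]$ and every label $k$, $$\mathbb P\big[p_t^{(r)}(k)-p_{t-1}^{(r)}(k)\ge v\big]\le b_2^{v-1}.$$
   Context: Fix $0<b_1<b_2<1$. Multi-class stochastic six-vertex dynamics: each site of $\mathbb Z$ holds nothing or a particle of class $r\in\{1,\dots,n\}$. One step uses independent $\chi^{(r)}(x)$ ($P[=1]=b_1$, else 0) and $j^{(r)}(x)$ ($P[=m]=(1-b_2)b_2^{m-1}$, $m\ge1$). Particles are updated in increasing class order and, within a class, from left to right. For the $k$-th class-$r$ particle at $x$, with the $(k+1)$-th class-$r$ particle at old position $y$ ($\infty$ if none): (a) it stays if some particle of class $<r$ jumped this step from a site $<x$ to a site $>x$; (b) otherwise it moves if site $x$ is already occupied at the new time by a class-$<r$ particle or by the $(k-1)$-th class-$r$ particle; (c) otherwise it stays if $\chi^{(r)}(x)=1$ and moves if $\chi^{(r)}(x)=0$. If it moves, its new position is $\min\{U,V,y\}$, where $U$ is the least site $>x$ that is the old position of a class-$<r$ particle that moved in this step, and $V$ is the site reached by advancing $j^{(r)}(x)$ sites to the right of $x$, not counting sites occupied by class-$<r$ particles that stayed. *)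

theory Defs
  imports "HOL-Probability.Probability" "HOL-Probability.Product_PMF"
begin

text \<open>Configuration: conf x = 0 means site x is empty, conf x = r (r \<ge> 1) means site x
holds a particle of class r.\<close>

definition cls_pos :: "(int \<Rightarrow> nat) \<Rightarrow> nat \<Rightarrow> int list" where
  "cls_pos conf r = sorted_list_of_set {x. conf x = r}"

fun adv :: "int set \<Rightarrow> int \<Rightarrow> nat \<Rightarrow> int" where
  "adv S x 0 = x"
| "adv S x (Suc m) = (LEAST z. adv S x m < z \<and> z \<notin> S)"

text \<open>Update of the class-r particles (old positions in increasing order), given the list L of
(old, new) positions of all particles of class < r, the coin chi (True means chi = 1), the jump
sizes jj, and the new position of the previous class-r particle.\<close>
fun cls_step :: "(int \<times> int) list \<Rightarrow> (int \<Rightarrow> bool) \<Rightarrow> (int \<Rightarrow> nat) \<Rightarrow> int option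
    \<Rightarrow> int list \<Rightarrow> int list" where
  "cls_step L ch jj prev [] = []"
| "cls_step L ch jj prev (x # rest) =
    (let blocked = (\<exists>(a, b) \<in> set L. a < x \<and> x < b);
         forced = ((\<exists>(a, b) \<in> set L. b = x) \<or> prev = Some x);
         moves = (\<not> blocked \<and> (forced \<or> \<not> ch x));
         U = {a. \<exists>b. (a, b) \<in> set L \<and> a \<noteq> b \<and> x < a};
         V = adv {a. (a, a) \<in> set L} x (jj x);
         Y = set (take 1 rest);
         nx = (if moves then Min (insert V (U \<union> Y)) else x)
     in nx # cls_step L ch jj (Some nx) rest)"

text \<open>Randomness: \<omega> (r, x) = (chi^(r)(x), j^(r)(x)).
lower_moves conf \<omega> r = (old, new) positions of all particles of class < r.\<close>
fun lower_moves :: "(int \<Rightarrow> nat) \<Rightarrow> (nat \<times> int \<Rightarrow> bool \<times> nat) \<Rightarrow> nat \<Rightarrow> (int \<times> int) list" where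
  "lower_moves conf \<omega> 0 = []"
| "lower_moves conf \<omega> (Suc r) =
    (let L = lower_moves conf \<omega> r in
     if r = 0 then [] else
     L @ zip (cls_pos conf r)
             (cls_step L (\<lambda>x. fst (\<omega> (r, x))) (\<lambda>x. snd (\<omega> (r, x))) None (cls_pos conf r)))"

definition new_pos :: "(int \<Rightarrow> nat) \<Rightarrow> (nat \<times> int \<Rightarrow> bool \<times> nat) \<Rightarrow> nat \<Rightarrow> int list" where
  "new_pos conf \<omega> r =
     cls_step (lower_moves conf \<omega> r) (\<lambda>x. fst (\<omega> (r, x))) (\<lambda>x. snd (\<omega> (r, x))) None
              (cls_pos conf r)"

text \<open>Law of the inputs: independent chi ~ Bernoulli(b1) and j with P[j = m] = (1-b2) b2^(m-1),
m \<ge> 1, for every class and every occupied site (the only inputs the step reads).\<close>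
definition inputs :: "nat \<Rightarrow> (int \<Rightarrow> nat) \<Rightarrow> real \<Rightarrow> real \<Rightarrow> (nat \<times> int \<Rightarrow> bool \<times> nat) pmf" where
  "inputs n conf b1 b2 =
     Pi_pmf ({1..n} \<times> {x. conf x \<noteq> 0}) (False, 1)
       (\<lambda>_. pair_pmf (bernoulli_pmf b1) (map_pmf Suc (geometric_pmf (1 - b2))))"

end

theory Submission
  imports Defs
begin

definition nxt :: "(int \<times> int) list \<Rightarrow> (int \<Rightarrow> bool) \<Rightarrow> (int \<Rightarrow> nat) \<Rightarrow> int option
    \<Rightarrow> int \<Rightarrow> int list \<Rightarrow> int" where
  "nxt L ch jj prev x rest =
    (let blocked = (\<exists>(a, b) \<in> set L. a < x \<and> x < b);
         forced = ((\<exists>(a, b) \<in> set L. b = x) \<or> prev = Some x);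
         moves = (\<not> blocked \<and> (forced \<or> \<not> ch x));
         U = {a. \<exists>b. (a, b) \<in> set L \<and> a \<noteq> b \<and> x < a};
         V = adv {a. (a, a) \<in> set L} x (jj x);
         Y = set (take 1 rest)
     in (if moves then Min (insert V (U \<union> Y)) else x))"

lemma cls_step_Cons':
  "cls_step L ch jj prev (x # rest) =
     nxt L ch jj prev x rest # cls_step L ch jj (Some (nxt L ch jj prev x rest)) rest"
  unfolding cls_step.simps nxt_def Let_def ..

declare cls_step.simps(2)[simp del]

lemma length_cls_step[simp]: "length (cls_step L ch jj prev xs) = length xs"
  by (induction xs arbitrary: prev) (auto simp: cls_step_Cons')

lemma nth_cls_step:
  "k < length xs \<Longrightarrow> \<exists>p. cls_step L ch jj prev xs ! k = nxt L ch jj p (xs ! k) (drop (Suc k) xs)"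
proof (induction xs arbitrary: prev k)
  case Nil then show ?case by simp
next
  case (Cons y ys)
  show ?case
  proof (cases k)
    case 0 then show ?thesis by (auto simp: cls_step_Cons')
  next
    case (Suc k') then show ?thesis using Cons by (auto simp: cls_step_Cons')
  qed
qed

lemma adv_Suc:
  assumes "finite S"
  shows "adv S x m < adv S x (Suc m) \<and> adv S x (Suc m) \<notin> S \<and>
         (\<forall>z. adv S x m < z \<and> z < adv S x (Suc m) \<longrightarrow> z \<in> S)"
proof -
  let ?P = "\<lambda>z. adv S x m < z \<and> z \<notin> S"
  have ex: "\<exists>z. ?P z"
  proof -
    have "finite (insert (adv S x m) S)" using assms by simp
    then have "\<forall>y\<in>insert (adv S x m) S. y \<le> Max (insert (adv S x m) S)"
      by simp
    then obtain M where "\<forall>y\<in>insert (adv S x m) S. y \<le> M" by blast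
    then show ?thesis by (intro exI[of _ "M+1"]) auto
  qed
  let ?Q = "\<lambda>k::nat. ?P (adv S x m + 1 + int k)"
  have exQ: "\<exists>k. ?Q k"
  proof -
    obtain z where z: "?P z" using ex by blast
    then have "?Q (nat (z - adv S x m - 1))" by simp
    then show ?thesis by blast
  qed
  define k0 where "k0 = (LEAST k. ?Q k)"
  have Qk0: "?Q k0" unfolding k0_def using LeastI_ex[OF exQ] .
  have minQ: "\<And>k. ?Q k \<Longrightarrow> k0 \<le> k" unfolding k0_def by (rule Least_le)
  have L: "Least ?P = adv S x m + 1 + int k0"
  proof (rule Least_equality)
    show "?P (adv S x m + 1 + int k0)" using Qk0 .
    fix y assume y: "?P y"
    then have "?Q (nat (y - adv S x m - 1))" by simp
    then have "k0 \<le> nat (y - adv S x m - 1)" by (rule minQ)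
    then show "adv S x m + 1 + int k0 \<le> y" using y by linarith
  qed
  have "?P (Least ?P)" using L Qk0 by simp
  moreover have "\<forall>z. adv S x m < z \<and> z < Least ?P \<longrightarrow> z \<in> S"
  proof (intro allI impI)
    fix z assume z: "adv S x m < z \<and> z < Least ?P"
    show "z \<in> S"
    proof (rule ccontr)
      assume "z \<notin> S"
      then have "?Q (nat (z - adv S x m - 1))" using z by simp
      then have "k0 \<le> nat (z - adv S x m - 1)" by (rule minQ)
      then show False using z L by linarith
    qed
  qed
  ultimately show ?thesis by simp
qed

lemma adv_ge: "finite S \<Longrightarrow> x \<le> adv S x m \<and> (0 < m \<longrightarrow> x < adv S x m)"
proof (induction m)
  case 0 then show ?case by simp
next
  case (Suc m) then show ?case using adv_Suc[OF Suc.prems, of x m] by auto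
qed

lemma adv_card: "finite S \<Longrightarrow> card ({x<..adv S x m} - S) = m"
proof (induction m)
  case 0 then show ?case by simp
next
  case (Suc m)
  note A = adv_Suc[OF Suc.prems, of x m]
  have ge: "x \<le> adv S x m" using adv_ge[OF Suc.prems] by blast
  have "{x<..adv S x (Suc m)} - S = insert (adv S x (Suc m)) ({x<..adv S x m} - S)"
  proof (intro equalityI subsetI)
    fix z assume z: "z \<in> {x<..adv S x (Suc m)} - S"
    show "z \<in> insert (adv S x (Suc m)) ({x<..adv S x m} - S)"
    proof (cases "z \<le> adv S x m")
      case True then show ?thesis using z by auto
    next
      case False
      then have "\<not> z < adv S x (Suc m)" using A z by auto
      then show ?thesis using z by auto
    qed
  next
    fix z assume "z \<in> insert (adv S x (Suc m)) ({x<..adv S x m} - S)"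
    then show "z \<in> {x<..adv S x (Suc m)} - S" using A ge by auto
  qed
  moreover have "adv S x (Suc m) \<notin> {x<..adv S x m} - S" using A by auto
  ultimately show ?case using Suc by simp
qed

lemma adv_count:
  assumes "finite S" "y < adv S x m" "x \<le> y"
  shows "card ({x<..y} - S) < m"
proof -
  have m: "0 < m" using assms by (cases m) auto
  then obtain m' where m': "m = Suc m'" by (cases m) auto
  have nS: "adv S x m \<notin> S" using adv_Suc[OF assms(1), of x m'] m' by simp
  have "insert (adv S x m) ({x<..y} - S) \<subseteq> {x<..adv S x m} - S" using assms nS by auto
  then have "card (insert (adv S x m) ({x<..y} - S)) \<le> card ({x<..adv S x m} - S)"
    by (intro card_mono) auto
  moreover have "adv S x m \<notin> {x<..y} - S" using assms by auto
  ultimately show ?thesis using adv_card[OF assms(1), of x m] by simp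
qed

lemma nxt_ne:
  assumes "nxt L ch jj p x rest \<noteq> x"
  shows "\<not> (\<exists>(a, b) \<in> set L. a < x \<and> x < b)"
    "nxt L ch jj p x rest \<le> adv {a. (a, a) \<in> set L} x (jj x)"
    "\<And>a b. (a, b) \<in> set L \<Longrightarrow> a \<noteq> b \<Longrightarrow> x < a \<Longrightarrow> nxt L ch jj p x rest \<le> a"
proof -
  let ?U = "{a. \<exists>b. (a, b) \<in> set L \<and> a \<noteq> b \<and> x < a}"
  have fU: "finite ?U"
  proof -
    have "?U \<subseteq> fst ` set L" by force
    then show ?thesis by (rule finite_subset) simp
  qed
  have fin: "finite (insert (adv {a. (a, a) \<in> set L} x (jj x)) (?U \<union> set (take 1 rest)))"
    using fU by simp
  show "\<not> (\<exists>(a, b) \<in> set L. a < x \<and> x < b)" using assms unfolding nxt_def Let_def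
    by (auto split: if_splits)
  show "nxt L ch jj p x rest \<le> adv {a. (a, a) \<in> set L} x (jj x)"
    using assms fin unfolding nxt_def Let_def by (auto split: if_splits)
  fix a b assume "(a, b) \<in> set L" "a \<noteq> b" "x < a"
  then have "a \<in> ?U" by blast
  then show "nxt L ch jj p x rest \<le> a"
    using assms fin unfolding nxt_def Let_def by (auto split: if_splits)
qed

lemma nxt_eq:
  assumes "nxt L ch jj p x rest = x" "1 \<le> jj x" "\<forall>y\<in>set rest. x < y"
  shows "(\<exists>(a, b) \<in> set L. a < x \<and> x < b) \<or> ch x"
proof (rule ccontr)
  assume H: "\<not> ((\<exists>(a, b) \<in> set L. a < x \<and> x < b) \<or> ch x)"
  let ?S = "{a. (a, a) \<in> set L}"
  let ?U = "{a. \<exists>b. (a, b) \<in> set L \<and> a \<noteq> b \<and> x < a}"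
  have fS: "finite ?S"
  proof -
    have "?S \<subseteq> fst ` set L" by force
    then show ?thesis by (rule finite_subset) simp
  qed
  have fU: "finite ?U"
  proof -
    have "?U \<subseteq> fst ` set L" by force
    then show ?thesis by (rule finite_subset) simp
  qed
  have V: "x < adv ?S x (jj x)" using adv_ge[OF fS, of x "jj x"] assms(2) by auto
  have "x < Min (insert (adv ?S x (jj x)) (?U \<union> set (take 1 rest)))"
    using fU V assms(3) by (auto dest: in_set_takeD)
  moreover have "nxt L ch jj p x rest = Min (insert (adv ?S x (jj x)) (?U \<union> set (take 1 rest)))"
    using H unfolding nxt_def Let_def by auto
  ultimately show False using assms(1) by simp
qed

lemma cls_pos_set:
  assumes "finite {x. conf x \<noteq> 0}" "1 \<le> c"
  shows "set (cls_pos conf c) = {x. conf x = c}" "sorted_wrt (<) (cls_pos conf c)"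
proof -
  have "{x. conf x = c} \<subseteq> {x. conf x \<noteq> 0}" using assms(2) by auto
  then have "finite {x. conf x = c}" using assms(1) by (rule finite_subset)
  then show "set (cls_pos conf c) = {x. conf x = c}" unfolding cls_pos_def by simp
  show "sorted_wrt (<) (cls_pos conf c)" unfolding cls_pos_def by (rule strict_sorted_list_of_set)
qed

lemma drop_gt:
  assumes "sorted_wrt (<) xs" "k < length xs"
  shows "\<forall>y\<in>set (drop (Suc k) xs). xs ! k < y"
proof
  fix y assume "y \<in> set (drop (Suc k) xs)"
  then obtain i where i: "i < length (drop (Suc k) xs)" "y = drop (Suc k) xs ! i"
    by (auto simp: in_set_conv_nth)
  then have "y = xs ! (Suc k + i)" "Suc k + i < length xs" using assms by auto
  then show "xs ! k < y" using assms sorted_wrt_nth_less[OF assms(1)] by auto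
qed

lemma LM_mono: "c \<le> d \<Longrightarrow> set (lower_moves conf \<omega> c) \<subseteq> set (lower_moves conf \<omega> d)"
proof (induction d)
  case 0 then show ?case by simp
next
  case (Suc d)
  show ?case
  proof (cases "c = Suc d")
    case True then show ?thesis by simp
  next
    case False
    then have "set (lower_moves conf \<omega> c) \<subseteq> set (lower_moves conf \<omega> d)" using Suc by simp
    moreover have "set (lower_moves conf \<omega> d) \<subseteq> set (lower_moves conf \<omega> (Suc d))"
      by (cases d) (auto simp: Let_def)
    ultimately show ?thesis by blast
  qed
qed

lemma LM_class:
  assumes "finite {x. conf x \<noteq> 0}"
  shows "(a, b) \<in> set (lower_moves conf \<omega> c) \<Longrightarrow> 1 \<le> conf a \<and> conf a < c"
proof (induction c)
  case 0 then show ?case by simp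
next
  case (Suc c)
  show ?case
  proof (cases "c = 0")
    case True then show ?thesis using Suc by simp
  next
    case False
    then have "(a, b) \<in> set (lower_moves conf \<omega> c) \<or> a \<in> set (cls_pos conf c)"
      using Suc.prems by (auto simp: Let_def dest: set_zip_leftD)
    then show ?thesis
    proof
      assume "(a, b) \<in> set (lower_moves conf \<omega> c)"
      then show ?thesis using Suc.IH by simp
    next
      assume "a \<in> set (cls_pos conf c)"
      then show ?thesis using cls_pos_set[OF assms, of c] False by simp
    qed
  qed
qed

lemma LM_complete:
  assumes "finite {x. conf x \<noteq> 0}" "1 \<le> conf a" "conf a < c"
  shows "\<exists>p. (a, nxt (lower_moves conf \<omega> (conf a)) (\<lambda>x. fst (\<omega> (conf a, x)))
              (\<lambda>x. snd (\<omega> (conf a, x))) p a (drop (Suc (LEAST i. cls_pos conf (conf a) ! i = a)) (cls_pos conf (conf a))))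
            \<in> set (lower_moves conf \<omega> c)
          \<and> (\<forall>y\<in>set (drop (Suc (LEAST i. cls_pos conf (conf a) ! i = a)) (cls_pos conf (conf a))). a < y)"
proof -
  define c' where "c' = conf a"
  define xs where "xs = cls_pos conf c'"
  have "a \<in> set xs" using cls_pos_set[OF assms(1), of c'] assms unfolding xs_def c'_def by simp
  then obtain i where i: "i < length xs" "xs ! i = a" by (auto simp: in_set_conv_nth)
  define k where "k = (LEAST i. xs ! i = a)"
  have k: "xs ! k = a" "k \<le> i" unfolding k_def using i by (auto intro: LeastI Least_le)
  then have kl: "k < length xs" using i by simp
  obtain p where p: "cls_step (lower_moves conf \<omega> c') (\<lambda>x. fst (\<omega> (c', x))) (\<lambda>x. snd (\<omega> (c', x))) None xs ! k
     = nxt (lower_moves conf \<omega> c') (\<lambda>x. fst (\<omega> (c', x))) (\<lambda>x. snd (\<omega> (c', x))) p a (drop (Suc k) xs)"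
    using nth_cls_step[OF kl] k by metis
  have "(xs ! k, cls_step (lower_moves conf \<omega> c') (\<lambda>x. fst (\<omega> (c', x))) (\<lambda>x. snd (\<omega> (c', x))) None xs ! k)
        \<in> set (zip xs (cls_step (lower_moves conf \<omega> c') (\<lambda>x. fst (\<omega> (c', x))) (\<lambda>x. snd (\<omega> (c', x))) None xs))"
    using kl by (auto simp: set_zip)
  then have "(a, nxt (lower_moves conf \<omega> c') (\<lambda>x. fst (\<omega> (c', x))) (\<lambda>x. snd (\<omega> (c', x))) p a (drop (Suc k) xs))
     \<in> set (lower_moves conf \<omega> (Suc c'))"
    using p k assms(2) unfolding xs_def c'_def by (auto simp: Let_def)
  moreover have "Suc c' \<le> c" using assms unfolding c'_def by simp
  ultimately have "(a, nxt (lower_moves conf \<omega> c') (\<lambda>x. fst (\<omega> (c', x))) (\<lambda>x. snd (\<omega> (c', x))) p a (drop (Suc k) xs))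
     \<in> set (lower_moves conf \<omega> c)" using LM_mono by blast
  moreover have "\<forall>y\<in>set (drop (Suc k) xs). a < y"
    using drop_gt[OF _ kl] cls_pos_set(2)[OF assms(1), of c'] assms k unfolding xs_def c'_def by auto
  ultimately show ?thesis unfolding k_def xs_def c'_def by blast
qed

lemma deterministic:
  assumes fin: "finite {x. conf x \<noteq> 0}" and r: "1 \<le> r" and kl: "k < length (cls_pos conf r)"
    and snd1: "\<forall>i. 1 \<le> snd (\<omega> i)" and v: "1 \<le> v"
    and E: "new_pos conf \<omega> r ! k - cls_pos conf r ! k \<ge> int v"
  defines "x \<equiv> cls_pos conf r ! k"
  defines "A \<equiv> {a. x < a \<and> a < x + int v \<and> 1 \<le> conf a \<and> conf a < r}"
  shows "(\<forall>a\<in>A. fst (\<omega> (conf a, a))) \<and> v - card A \<le> snd (\<omega> (r, x))"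
proof -
  define L where "L = lower_moves conf \<omega> r"
  define nx where "nx = new_pos conf \<omega> r ! k"
  obtain p where p: "nx = nxt L (\<lambda>x. fst (\<omega> (r, x))) (\<lambda>x. snd (\<omega> (r, x))) p x (drop (Suc k) (cls_pos conf r))"
    using nth_cls_step[OF kl] unfolding nx_def new_pos_def L_def x_def by metis
  have ge: "x + int v \<le> nx" using E unfolding nx_def x_def by simp
  then have ne: "nx \<noteq> x" using v by simp
  note N = nxt_ne[OF ne[unfolded p]]
  have confx: "conf x = r" using cls_pos_set[OF fin r] kl unfolding x_def by (auto intro: nth_mem)
  have U: "\<And>a b. (a, b) \<in> set L \<Longrightarrow> a \<noteq> b \<Longrightarrow> x < a \<Longrightarrow> x + int v \<le> a"
    using N(3) ge p by fastforce
  have claim1: "(a, a) \<in> set L \<and> fst (\<omega> (conf a, a))" if a: "a \<in> A" for a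
  proof -
    have a1: "1 \<le> conf a" "conf a < r" "x < a" "a < x + int v" using a unfolding A_def by auto
    obtain q where q: "(a, nxt (lower_moves conf \<omega> (conf a)) (\<lambda>x. fst (\<omega> (conf a, x)))
              (\<lambda>x. snd (\<omega> (conf a, x))) q a (drop (Suc (LEAST i. cls_pos conf (conf a) ! i = a)) (cls_pos conf (conf a))))
            \<in> set L"
        and rest: "\<forall>y\<in>set (drop (Suc (LEAST i. cls_pos conf (conf a) ! i = a)) (cls_pos conf (conf a))). a < y"
      using LM_complete[OF fin a1(1,2), of \<omega>] unfolding L_def by blast
    define b where "b = nxt (lower_moves conf \<omega> (conf a)) (\<lambda>x. fst (\<omega> (conf a, x)))
              (\<lambda>x. snd (\<omega> (conf a, x))) q a (drop (Suc (LEAST i. cls_pos conf (conf a) ! i = a)) (cls_pos conf (conf a)))"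
    have ab: "(a, b) \<in> set L" using q unfolding b_def .
    have "b = a"
    proof (rule ccontr)
      assume "b \<noteq> a"
      then have "x + int v \<le> a" using U[OF ab] a1 by auto
      then show False using a1 by simp
    qed
    then have "(\<exists>(a', b') \<in> set (lower_moves conf \<omega> (conf a)). a' < a \<and> a < b') \<or> fst (\<omega> (conf a, a))"
      using nxt_eq[OF \<open>b = a\<close>[unfolded b_def] _ rest] snd1 by simp
    moreover have "\<not> (\<exists>(a', b') \<in> set (lower_moves conf \<omega> (conf a)). a' < a \<and> a < b')"
    proof
      assume "\<exists>(a', b') \<in> set (lower_moves conf \<omega> (conf a)). a' < a \<and> a < b'"
      then obtain a' b' where ab': "(a', b') \<in> set (lower_moves conf \<omega> (conf a))" "a' < a" "a < b'" by blast
      then have abL: "(a', b') \<in> set L" using LM_mono[of "conf a" r conf \<omega>] a1 unfolding L_def by auto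
      have "conf a' < conf a" using LM_class[OF fin ab'(1)] by simp
      then have "a' \<noteq> x" using confx a1 by auto
      show False
      proof (cases "a' < x")
        case True
        then show False using N(1) abL ab' a1 by auto
      next
        case False
        then have "x < a'" using \<open>a' \<noteq> x\<close> by simp
        then have "x + int v \<le> a'" using U[OF abL] ab' by auto
        then show False using ab' a1 by simp
      qed
    qed
    ultimately show ?thesis using ab \<open>b = a\<close> by auto
  qed
  let ?S = "{a. (a, a) \<in> set L}"
  have fS: "finite ?S"
  proof -
    have "?S \<subseteq> fst ` set L" by force
    then show ?thesis by (rule finite_subset) simp
  qed
  have "x + int v - 1 < adv ?S x (snd (\<omega> (r, x)))" using N(2) ge p by simp
  then have c1: "card ({x<..x + int v - 1} - ?S) < snd (\<omega> (r, x))"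
    using adv_count[OF fS] v by simp
  have "{x<..x + int v - 1} - A \<subseteq> {x<..x + int v - 1} - ?S"
    using LM_class[OF fin] unfolding A_def L_def by fastforce
  then have "card ({x<..x + int v - 1} - A) \<le> card ({x<..x + int v - 1} - ?S)"
    by (intro card_mono) auto
  moreover have "A \<subseteq> {x<..x + int v - 1}" unfolding A_def by auto
  then have "card ({x<..x + int v - 1} - A) = card {x<..x + int v - 1} - card A"
    by (intro card_Diff_subset) (auto intro: finite_subset)
  moreover have "card {x<..x + int v - 1} = v - 1" by simp
  ultimately have "v - card A \<le> snd (\<omega> (r, x))" using c1 by linarith
  then show ?thesis using claim1 by blast
qed

lemma geom_tail:
  assumes "0 < p" "p \<le> 1"
  shows "measure_pmf.prob (geometric_pmf p) {g. m \<le> g} = (1 - p) ^ m"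
proof (induction m)
  case 0 then show ?case by simp
next
  case (Suc m)
  have "{g. Suc m \<le> g} = {g. m \<le> g} - {m}" by auto
  then have "measure_pmf.prob (geometric_pmf p) {g. Suc m \<le> g}
      = measure_pmf.prob (geometric_pmf p) {g. m \<le> g} - measure_pmf.prob (geometric_pmf p) {m}"
    by (simp add: measure_pmf.finite_measure_Diff)
  also have "\<dots> = (1 - p) ^ m - (1 - p) ^ m * p" using Suc assms by (simp add: measure_pmf_single)
  finally show ?case by (simp add: algebra_simps)
qed

lemma jtail:
  assumes "0 < b2" "b2 < 1" "1 \<le> t"
  shows "measure_pmf.prob (map_pmf Suc (geometric_pmf (1 - b2))) {m. t \<le> m} = b2 ^ (t - 1)"
proof -
  have "measure_pmf.prob (map_pmf Suc (geometric_pmf (1 - b2))) {m. t \<le> m}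
     = measure_pmf.prob (geometric_pmf (1 - b2)) (Suc -` {m. t \<le> m})" by simp
  also have "Suc -` {m. t \<le> m} = {g. t - 1 \<le> g}" using assms by auto
  also have "measure_pmf.prob (geometric_pmf (1 - b2)) {g. t - 1 \<le> g} = b2 ^ (t - 1)"
    using geom_tail[of "1 - b2" "t - 1"] assms by simp
  finally show ?thesis .
qed

theorem lemma2p10:
  fixes b1 b2 :: real and n r k v :: nat and conf :: "int \<Rightarrow> nat"
  assumes "0 < b1" "b1 < b2" "b2 < 1"
    and "finite {x. conf x \<noteq> 0}" "\<forall>x. conf x \<le> n"
    and "1 \<le> r" "r \<le> n" "k < length (cls_pos conf r)"
  shows "measure_pmf.prob (inputs n conf b1 b2)
           {\<omega>. new_pos conf \<omega> r ! k - cls_pos conf r ! k \<ge> int v}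
         \<le> b2 powi (int v - 1)"
proof (cases "v = 0")
  case True
  have "measure_pmf.prob (inputs n conf b1 b2) {\<omega>. new_pos conf \<omega> r ! k - cls_pos conf r ! k \<ge> int v} \<le> 1"
    by simp
  also have "1 \<le> b2 powi (int v - 1)" using True assms by (simp add: power_int_minus field_simps)
  finally show ?thesis .
next
  case False
  then have v: "1 \<le> v" by simp
  define E where "E = {\<omega>. new_pos conf \<omega> r ! k - cls_pos conf r ! k \<ge> int v}"
  define I where "I = {1..n} \<times> {x. conf x \<noteq> 0}"
  define q where "q = pair_pmf (bernoulli_pmf b1) (map_pmf Suc (geometric_pmf (1 - b2)))"
  have P: "inputs n conf b1 b2 = Pi_pmf I (False, 1) (\<lambda>_. q)"
    unfolding inputs_def I_def q_def ..
  have fI: "finite I" unfolding I_def using assms(4) by simp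
  define x where "x = cls_pos conf r ! k"
  define A where "A = {a. x < a \<and> a < x + int v \<and> 1 \<le> conf a \<and> conf a < r}"
  define s where "s = card A"
  define D where "D = (\<lambda>a. (conf a, a)) ` A"
  define B where "B = (\<lambda>i. if i = (r, x) then UNIV \<times> {m. v - s \<le> m}
                           else if i \<in> D then {True} \<times> UNIV else (UNIV :: (bool \<times> nat) set))"
  have confx: "conf x = r" using cls_pos_set[OF assms(4,6)] assms(8) unfolding x_def by (auto intro: nth_mem)
  have AI: "A \<subseteq> {x<..x + int v - 1}" unfolding A_def by auto
  have fA: "finite A" using AI by (rule finite_subset) simp
  have sv: "s \<le> v - 1" unfolding s_def using card_mono[OF _ AI] by simp
  have Esub: "E \<inter> set_pmf (inputs n conf b1 b2) \<subseteq> Pi I B"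
  proof
    fix \<omega> assume w: "\<omega> \<in> E \<inter> set_pmf (inputs n conf b1 b2)"
    have SP: "set_pmf (inputs n conf b1 b2) = PiE_dflt I (False, 1) (set_pmf \<circ> (\<lambda>_. q))"
      unfolding P by (rule set_Pi_pmf[OF fI])
    have w2: "\<omega> \<in> PiE_dflt I (False, 1) (set_pmf \<circ> (\<lambda>_. q))"
      using w unfolding SP by (rule IntD2)
    have snd1: "\<forall>i. 1 \<le> snd (\<omega> i)"
    proof
      fix i show "1 \<le> snd (\<omega> i)"
        using w2[unfolded PiE_dflt_def, THEN CollectD, THEN spec[of _ i]] unfolding q_def
        by (cases "i \<in> I") (auto simp: set_pair_pmf)
    qed
    have Ew: "int v \<le> new_pos conf \<omega> r ! k - cls_pos conf r ! k" using w unfolding E_def by simp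
    have det: "(\<forall>a\<in>A. fst (\<omega> (conf a, a))) \<and> v - card A \<le> snd (\<omega> (r, x))"
      unfolding A_def x_def by (rule deterministic[OF assms(4,6,8) snd1 v Ew])
    show "\<omega> \<in> Pi I B"
    proof
      fix i assume "i \<in> I"
      show "\<omega> i \<in> B i"
      proof (cases "i = (r, x)")
        case True then show ?thesis using det unfolding B_def s_def by (simp add: mem_Times_iff)
      next
        case F1: False
        show ?thesis
        proof (cases "i \<in> D")
          case True
          then obtain a where a: "a \<in> A" "i = (conf a, a)" unfolding D_def by blast
          then have "fst (\<omega> i)" using det by simp
          then show ?thesis using F1 True unfolding B_def by (simp add: mem_Times_iff)
        next
          case False then show ?thesis using F1 unfolding B_def by simp
        qed
      qed
    qed
  qed
  have mB: "measure_pmf.prob q (B i) = (if i = (r, x) then b2 ^ (v - s - 1) else if i \<in> D then b1 else 1)" for i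
  proof -
    have "measure_pmf.prob q (UNIV \<times> {m. v - s \<le> m}) = b2 ^ (v - s - 1)"
    proof -
      have "measure_pmf.prob q (UNIV \<times> {m. v - s \<le> m}) = measure_pmf.prob (bernoulli_pmf b1) UNIV *
          measure_pmf.prob (map_pmf Suc (geometric_pmf (1 - b2))) {m. v - s \<le> m}"
        unfolding q_def by (rule measure_pmf_prob_product) auto
      also have "\<dots> = b2 ^ (v - s - 1)" using jtail[of b2 "v - s"] assms sv v by simp
      finally show ?thesis .
    qed
    moreover have "measure_pmf.prob q ({True} \<times> UNIV) = b1"
    proof -
      have "measure_pmf.prob q ({True} \<times> UNIV) = measure_pmf.prob (bernoulli_pmf b1) {True} *
          measure_pmf.prob (map_pmf Suc (geometric_pmf (1 - b2))) UNIV"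
        unfolding q_def by (rule measure_pmf_prob_product) auto
      also have "\<dots> = b1" using assms by (simp add: measure_pmf_single)
      finally show ?thesis .
    qed
    ultimately show ?thesis unfolding B_def by simp
  qed
  have rxI: "(r, x) \<in> I" unfolding I_def using confx assms by auto
  have DI: "D \<subseteq> I" unfolding I_def D_def A_def using assms(5) by auto
  have rxD: "(r, x) \<notin> D" unfolding D_def A_def by auto
  have fD: "finite D" unfolding D_def using fA by simp
  have cD: "card D = s" unfolding D_def s_def by (rule card_image) (auto simp: inj_on_def)
  have "measure_pmf.prob (inputs n conf b1 b2) E = measure_pmf.prob (inputs n conf b1 b2) (E \<inter> set_pmf (inputs n conf b1 b2))"
    by (simp add: measure_Int_set_pmf)
  also have "\<dots> \<le> measure_pmf.prob (inputs n conf b1 b2) (Pi I B)"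
    by (rule measure_pmf.finite_measure_mono[OF Esub]) simp
  also have "\<dots> = (\<Prod>i\<in>I. measure_pmf.prob q (B i))"
    unfolding P by (rule measure_Pi_pmf_Pi[OF fI])
  also have "\<dots> = (\<Prod>i\<in>insert (r, x) D. measure_pmf.prob q (B i))"
    using rxI DI fI by (intro prod.mono_neutral_right) (auto simp: mB)
  also have "\<dots> = b2 ^ (v - s - 1) * b1 ^ s"
  proof -
    have "(\<Prod>i\<in>D. measure_pmf.prob q (B i)) = (\<Prod>i\<in>D. b1)"
      using rxD by (intro prod.cong) (auto simp: mB)
    then show ?thesis using rxD fD cD by (simp add: mB)
  qed
  also have "\<dots> \<le> b2 ^ (v - s - 1) * b2 ^ s"
    using assms by (intro mult_left_mono power_mono) auto
  also have "\<dots> = b2 ^ (v - 1)" using sv v by (simp add: power_add[symmetric])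
  also have "\<dots> = b2 powi (int v - 1)"
  proof -
    have "int v - 1 = int (v - 1)" using v by simp
    then show ?thesis by (simp only: power_int_of_nat)
  qed
  finally show ?thesis unfolding E_def .
qed
end
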